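(* Let $G$ be a graph with no efficient dominating set. Then $|V(G)|\leq\gamma(G)(\Delta(G)+1)-1$. Moreover: (i) Suppose $|V(G)|=\gamma(G)(\Delta(G)+1)-1$. Then (a) for every $\gamma$-set $D$ of $G$ there is exactly one vertex $y_D\in V(G)\setminus D$ such that $D$ is an efficient dominating set of $G-y_D$, and $y_D$ is adjacent to exactly $2$ vertices of $D$; and (b) every vertex belonging to some $\gamma$-set of $G$ has degree $\Delta(G)$. In particular, if every vertex of $G$ belongs to some $\gamma$-set of $G$, then $G$ is regular. (ii) If there exist a $\gamma$-set $D$ of $G$ and a vertex $y\in V(G)\setminus D$ such that $D$ is an efficient dominating set of $G-y$, $y$ is adjacent to exactly $2$ vertices of $D$, and every vertex of $D$ has degree $\Delta(G)$, then $|V(G)|=\gamma(G)(\Delta(G)+1)-1$.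
   Context: All graphs are finite, simple and undirected. For $v\in V(G)$, $N[v]$ is the closed neighborhood of $v$. A set $D\subseteq V(G)$ is dominating if every vertex of $G$ not in $D$ has a neighbor in $D$; $\gamma(G)$ is the minimum size of a dominating set, and a dominating set of size $\gamma(G)$ is a $\gamma$-set. A set $D\subseteq V(H)$ is an efficient dominating set of a graph $H$ if $|N_H[v]\cap D|=1$ for every $v\in V(H)$. $\Delta(G)$ is the maximum degree. *)

theory Defs
  imports Main
begin

definition simple_graph :: "'a set \<Rightarrow> ('a \<Rightarrow> 'a \<Rightarrow> bool) \<Rightarrow> bool" where
  "simple_graph V E \<longleftrightarrow> finite V \<and> (\<forall>x y. E x y \<longrightarrow> x \<in> V \<and> y \<in> V)
     \<and> (\<forall>x y. E x y \<longrightarrow> E y x) \<and> (\<forall>x. \<not> E x x)"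

definition nbhd :: "'a set \<Rightarrow> ('a \<Rightarrow> 'a \<Rightarrow> bool) \<Rightarrow> 'a \<Rightarrow> 'a set" where
  "nbhd V E v = {u \<in> V. E v u}"

definition cnbhd :: "'a set \<Rightarrow> ('a \<Rightarrow> 'a \<Rightarrow> bool) \<Rightarrow> 'a \<Rightarrow> 'a set" where
  "cnbhd V E v = insert v (nbhd V E v)"

definition degree :: "'a set \<Rightarrow> ('a \<Rightarrow> 'a \<Rightarrow> bool) \<Rightarrow> 'a \<Rightarrow> nat" where
  "degree V E v = card (nbhd V E v)"

definition max_degree :: "'a set \<Rightarrow> ('a \<Rightarrow> 'a \<Rightarrow> bool) \<Rightarrow> nat" where
  "max_degree V E = Max (insert 0 (degree V E ` V))"

definition regular :: "'a set \<Rightarrow> ('a \<Rightarrow> 'a \<Rightarrow> bool) \<Rightarrow> bool" where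
  "regular V E \<longleftrightarrow> (\<forall>u\<in>V. \<forall>v\<in>V. degree V E u = degree V E v)"

definition dominating :: "'a set \<Rightarrow> ('a \<Rightarrow> 'a \<Rightarrow> bool) \<Rightarrow> 'a set \<Rightarrow> bool" where
  "dominating V E D \<longleftrightarrow> D \<subseteq> V \<and> (\<forall>v \<in> V - D. \<exists>u \<in> D. E v u)"

definition domination_number :: "'a set \<Rightarrow> ('a \<Rightarrow> 'a \<Rightarrow> bool) \<Rightarrow> nat" where
  "domination_number V E = Min {card D | D. dominating V E D}"

definition gamma_set :: "'a set \<Rightarrow> ('a \<Rightarrow> 'a \<Rightarrow> bool) \<Rightarrow> 'a set \<Rightarrow> bool" where
  "gamma_set V E D \<longleftrightarrow> dominating V E D \<and> card D = domination_number V E"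

definition efficient_dominating :: "'a set \<Rightarrow> ('a \<Rightarrow> 'a \<Rightarrow> bool) \<Rightarrow> 'a set \<Rightarrow> bool" where
  "efficient_dominating V E D \<longleftrightarrow> D \<subseteq> V \<and> (\<forall>v \<in> V. card (cnbhd V E v \<inter> D) = 1)"

definition del_vert_V :: "'a set \<Rightarrow> 'a \<Rightarrow> 'a set" where
  "del_vert_V V y = V - {y}"

definition del_vert_E :: "('a \<Rightarrow> 'a \<Rightarrow> bool) \<Rightarrow> 'a \<Rightarrow> 'a \<Rightarrow> 'a \<Rightarrow> bool" where
  "del_vert_E E y = (\<lambda>a b. E a b \<and> a \<noteq> y \<and> b \<noteq> y)"

end

theory Submission
  imports Defs
begin

lemma cn_sub:
  assumes G: "simple_graph V E" and v: "v \<in> V"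
  shows "cnbhd V E v \<subseteq> V"
  using v unfolding cnbhd_def nbhd_def by auto

lemma cn_card:
  assumes G: "simple_graph V E"
  shows "card (cnbhd V E v) = degree V E v + 1"
proof -
  have "finite (nbhd V E v)" using G unfolding simple_graph_def nbhd_def by auto
  moreover have "v \<notin> nbhd V E v" using G unfolding simple_graph_def nbhd_def by auto
  ultimately show ?thesis unfolding cnbhd_def degree_def by simp
qed

lemma deg_le:
  assumes G: "simple_graph V E" and v: "v \<in> V"
  shows "degree V E v \<le> max_degree V E"
proof -
  have "finite V" using G unfolding simple_graph_def by auto
  then show ?thesis unfolding max_degree_def using v by (intro Max_ge) auto
qed

lemma cn_sym:
  assumes G: "simple_graph V E" and "v \<in> V" "d \<in> V"
  shows "d \<in> cnbhd V E v \<longleftrightarrow> v \<in> cnbhd V E d"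
  using assms unfolding cnbhd_def nbhd_def simple_graph_def by auto

lemma double_count:
  assumes G: "simple_graph V E" and D: "D \<subseteq> V"
  shows "(\<Sum>v\<in>V. card (cnbhd V E v \<inter> D)) = (\<Sum>d\<in>D. card (cnbhd V E d))"
proof -
  have fV: "finite V" using G unfolding simple_graph_def by auto
  have fD: "finite D" using D fV finite_subset by auto
  have 1: "card (cnbhd V E v \<inter> D) = (\<Sum>d\<in>D. if v \<in> cnbhd V E d then 1 else 0)" if v: "v \<in> V" for v
  proof -
    have "cnbhd V E v \<inter> D = {d \<in> D. v \<in> cnbhd V E d}"
      using cn_sym[OF G v] D by auto
    then show ?thesis using fD by (simp add: sum.If_cases Int_def)
  qed
  have 2: "card (cnbhd V E d) = (\<Sum>v\<in>V. if v \<in> cnbhd V E d then 1 else 0)" if d: "d \<in> D" for d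
  proof -
    have "cnbhd V E d = {v \<in> V. v \<in> cnbhd V E d}"
      using cn_sub[OF G] d D by auto
    then show ?thesis using fV by (simp add: sum.If_cases Int_def)
  qed
  have "(\<Sum>v\<in>V. card (cnbhd V E v \<inter> D)) = (\<Sum>v\<in>V. \<Sum>d\<in>D. if v \<in> cnbhd V E d then 1 else 0)"
    using 1 by (rule sum.cong[OF refl])
  also have "\<dots> = (\<Sum>d\<in>D. \<Sum>v\<in>V. if v \<in> cnbhd V E d then 1 else 0)"
    by (rule sum.swap)
  also have "\<dots> = (\<Sum>d\<in>D. card (cnbhd V E d))"
    using 2 by (intro sum.cong) auto
  finally show ?thesis .
qed

lemma dom_cnt:
  assumes "dominating V E D" "v \<in> V" "simple_graph V E"
  shows "1 \<le> card (cnbhd V E v \<inter> D)"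
proof -
  have fV: "finite V" using assms unfolding simple_graph_def by auto
  have "\<exists>u. u \<in> cnbhd V E v \<inter> D"
  proof (cases "v \<in> D")
    case True then show ?thesis unfolding cnbhd_def by auto
  next
    case False
    then obtain u where "u \<in> D" "E v u" using assms(1,2) unfolding dominating_def by auto
    moreover have "u \<in> V" using calculation(1) assms(1) unfolding dominating_def by auto
    ultimately show ?thesis unfolding cnbhd_def nbhd_def by auto
  qed
  moreover have "finite (cnbhd V E v \<inter> D)" using cn_sub[OF assms(3,2)] fV finite_subset by blast
  ultimately have "0 < card (cnbhd V E v \<inter> D)" by (subst card_gt_0_iff) blast
  then show ?thesis by simp
qed

lemma gamma_exists:
  assumes G: "simple_graph V E"
  shows "\<exists>D. gamma_set V E D"
proof -
  have fV: "finite V" using G unfolding simple_graph_def by auto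
  have "dominating V E V" unfolding dominating_def by auto
  then have ne: "{card D | D. dominating V E D} \<noteq> {}" by auto
  have fin: "finite {card D | D. dominating V E D}"
  proof -
    have "{card D | D. dominating V E D} \<subseteq> {..card V}"
      using fV unfolding dominating_def by (auto intro: card_mono)
    then show ?thesis using finite_subset by blast
  qed
  have "domination_number V E \<in> {card D | D. dominating V E D}"
    unfolding domination_number_def using Min_in[OF fin ne] .
  then show ?thesis unfolding gamma_set_def by auto
qed

lemma sum_eq_one:
  fixes f :: "'a \<Rightarrow> nat"
  assumes "finite A" "sum f A = 1"
  shows "\<exists>y\<in>A. f y = 1 \<and> (\<forall>v\<in>A - {y}. f v = 0)"
proof -
  obtain y where y: "y \<in> A" "f y \<noteq> 0"
    using assms by (metis sum.neutral zero_neq_one)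
  have "sum f A = f y + sum f (A - {y})" using assms(1) y(1) by (simp add: sum.remove)
  then have "f y = 1" "sum f (A - {y}) = 0" using assms(2) y(2) by linarith+
  moreover have "\<forall>v\<in>A - {y}. f v = 0" using calculation(2) assms(1) by simp
  ultimately show ?thesis using y by blast
qed

lemma all_eq_max:
  fixes f :: "'a \<Rightarrow> nat"
  assumes "finite A" "\<forall>x\<in>A. f x \<le> c" "card A * c \<le> sum f A"
  shows "\<forall>x\<in>A. f x = c"
proof (rule ccontr)
  assume "\<not> ?thesis"
  then obtain a where "a \<in> A" "f a < c" using assms(2) by force
  then have "sum f A < sum (\<lambda>_. c) A" using assms by (intro sum_strict_mono_ex1) auto
  then show False using assms(3) by simp
qed

lemma del_cn:
  assumes "y \<notin> D" "v \<noteq> y"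
  shows "cnbhd (del_vert_V V y) (del_vert_E E y) v \<inter> D = cnbhd V E v \<inter> D"
proof -
  have "nbhd (del_vert_V V y) (del_vert_E E y) v = nbhd V E v - {y}"
    using assms unfolding nbhd_def del_vert_V_def del_vert_E_def by blast
  then show ?thesis using assms unfolding cnbhd_def by blast
qed

lemma del_eff:
  assumes "y \<notin> D" "D \<subseteq> V"
  shows "efficient_dominating (del_vert_V V y) (del_vert_E E y) D \<longleftrightarrow>
         (\<forall>v\<in>V - {y}. card (cnbhd V E v \<inter> D) = 1)"
proof -
  have "D \<subseteq> del_vert_V V y" using assms unfolding del_vert_V_def by auto
  moreover have "(\<forall>v\<in>del_vert_V V y. card (cnbhd (del_vert_V V y) (del_vert_E E y) v \<inter> D) = 1)
     \<longleftrightarrow> (\<forall>v\<in>V - {y}. card (cnbhd V E v \<inter> D) = 1)"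
    unfolding del_vert_V_def
  proof (intro ball_cong refl)
    fix v assume "v \<in> V - {y}"
    then have "v \<noteq> y" by blast
    then show "(card (cnbhd (V - {y}) (del_vert_E E y) v \<inter> D) = 1) = (card (cnbhd V E v \<inter> D) = 1)"
      using del_cn[OF assms(1), of v V E] unfolding del_vert_V_def by simp
  qed
  ultimately show ?thesis unfolding efficient_dominating_def by blast
qed

lemma sum_cnt_lower:
  assumes G: "simple_graph V E" and noeff: "\<not> (\<exists>D. efficient_dominating V E D)"
    and D: "dominating V E D"
  shows "card V + 1 \<le> (\<Sum>v\<in>V. card (cnbhd V E v \<inter> D))"
proof -
  have fV: "finite V" using G unfolding simple_graph_def by auto
  have ge: "\<forall>v\<in>V. 1 \<le> card (cnbhd V E v \<inter> D)" using dom_cnt[OF D _ G] by blast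
  have "(\<Sum>v\<in>V. 1) \<le> (\<Sum>v\<in>V. card (cnbhd V E v \<inter> D))" using ge by (intro sum_mono) blast
  then have le: "card V \<le> (\<Sum>v\<in>V. card (cnbhd V E v \<inter> D))" by simp
  have "card V \<noteq> (\<Sum>v\<in>V. card (cnbhd V E v \<inter> D))"
  proof
    assume eq: "card V = (\<Sum>v\<in>V. card (cnbhd V E v \<inter> D))"
    have "\<forall>v\<in>V. card (cnbhd V E v \<inter> D) = 1"
    proof (rule ccontr)
      assume "\<not> ?thesis"
      then obtain a where a: "a \<in> V" "card (cnbhd V E a \<inter> D) \<noteq> 1" by blast
      then have "1 < card (cnbhd V E a \<inter> D)" using ge by (metis le_neq_implies_less)
      then have "(\<Sum>v\<in>V. 1) < (\<Sum>v\<in>V. card (cnbhd V E v \<inter> D))"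
        using sum_strict_mono_ex1[OF fV, of "\<lambda>_. 1" "\<lambda>v. card (cnbhd V E v \<inter> D)"] ge a(1) by blast
      then show False using eq by simp
    qed
    moreover have "D \<subseteq> V" using D unfolding dominating_def by blast
    ultimately have "efficient_dominating V E D" unfolding efficient_dominating_def by blast
    then show False using noeff by blast
  qed
  then show ?thesis using le by linarith
qed

lemma sum_cn_upper:
  assumes G: "simple_graph V E" and D: "D \<subseteq> V"
  shows "(\<Sum>d\<in>D. card (cnbhd V E d)) \<le> card D * (max_degree V E + 1)"
proof -
  have "(\<Sum>d\<in>D. card (cnbhd V E d)) \<le> (\<Sum>d\<in>D. max_degree V E + 1)"
    using D deg_le[OF G] cn_card[OF G] by (intro sum_mono) auto
  then show ?thesis by simp
qed

theorem theorem3p9: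
  fixes V :: "'a set" and E :: "'a \<Rightarrow> 'a \<Rightarrow> bool"
  assumes G: "simple_graph V E"
    and noeff: "\<not> (\<exists>D. efficient_dominating V E D)"
  shows "card V \<le> domination_number V E * (max_degree V E + 1) - 1
    \<and> (card V = domination_number V E * (max_degree V E + 1) - 1 \<longrightarrow>
           (\<forall>D. gamma_set V E D \<longrightarrow>
              (\<exists>!y. y \<in> V - D \<and> efficient_dominating (del_vert_V V y) (del_vert_E E y) D) \<and>
              (\<forall>y \<in> V - D. efficient_dominating (del_vert_V V y) (del_vert_E E y) D
                   \<longrightarrow> card (nbhd V E y \<inter> D) = 2))
         \<and> (\<forall>v \<in> V. (\<exists>D. gamma_set V E D \<and> v \<in> D) \<longrightarrow> degree V E v = max_degree V E)
         \<and> ((\<forall>v \<in> V. \<exists>D. gamma_set V E D \<and> v \<in> D) \<longrightarrow> regular V E))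
    \<and> ((\<exists>D y. gamma_set V E D \<and> y \<in> V - D
              \<and> efficient_dominating (del_vert_V V y) (del_vert_E E y) D
              \<and> card (nbhd V E y \<inter> D) = 2
              \<and> (\<forall>v \<in> D. degree V E v = max_degree V E))
         \<longrightarrow> card V = domination_number V E * (max_degree V E + 1) - 1)"
proof -
  define g where "g = domination_number V E"
  define M where "M = max_degree V E"
  have fV: "finite V" using G unfolding simple_graph_def by auto
  have sandwich: "card V + 1 \<le> (\<Sum>v\<in>V. card (cnbhd V E v \<inter> D)) \<and>
      (\<Sum>v\<in>V. card (cnbhd V E v \<inter> D)) = (\<Sum>d\<in>D. card (cnbhd V E d)) \<and>
      (\<Sum>d\<in>D. card (cnbhd V E d)) \<le> g * (M + 1)" if gD: "gamma_set V E D" for D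
  proof -
    have dD: "dominating V E D" and cD: "card D = g" using gD unfolding gamma_set_def g_def by auto
    have DV: "D \<subseteq> V" using dD unfolding dominating_def by auto
    show ?thesis using sum_cnt_lower[OF G noeff dD] double_count[OF G DV]
        sum_cn_upper[OF G DV] cD M_def by simp
  qed
  obtain D0 where D0: "gamma_set V E D0" using gamma_exists[OF G] by blast
  have P1: "card V + 1 \<le> g * (M + 1)" using sandwich[OF D0] by linarith
  have part1: "card V \<le> g * (M + 1) - 1" using P1 by linarith
  have part2: "card V = g * (M + 1) - 1 \<longrightarrow>
           (\<forall>D. gamma_set V E D \<longrightarrow>
              (\<exists>!y. y \<in> V - D \<and> efficient_dominating (del_vert_V V y) (del_vert_E E y) D) \<and>
              (\<forall>y \<in> V - D. efficient_dominating (del_vert_V V y) (del_vert_E E y) D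
                   \<longrightarrow> card (nbhd V E y \<inter> D) = 2))
         \<and> (\<forall>v \<in> V. (\<exists>D. gamma_set V E D \<and> v \<in> D) \<longrightarrow> degree V E v = M)
         \<and> ((\<forall>v \<in> V. \<exists>D. gamma_set V E D \<and> v \<in> D) \<longrightarrow> regular V E)" (is "?P2")
  proof
    assume eq: "card V = g * (M + 1) - 1"
    then have eq': "g * (M + 1) = card V + 1" using P1 by linarith
    have fullD: "\<forall>d\<in>D. card (cnbhd V E d) = M + 1" if gD: "gamma_set V E D" for D
    proof -
      have dD: "dominating V E D" and cD: "card D = g" using gD unfolding gamma_set_def g_def by auto
      have DV: "D \<subseteq> V" using dD unfolding dominating_def by auto
      have fD: "finite D" using DV fV finite_subset by auto
      show ?thesis
      proof (rule all_eq_max[OF fD])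
        show "\<forall>x\<in>D. card (cnbhd V E x) \<le> M + 1"
          using DV deg_le[OF G] cn_card[OF G] M_def by auto
        show "card D * (M + 1) \<le> (\<Sum>d\<in>D. card (cnbhd V E d))"
          using sandwich[OF gD] cD eq' by simp
      qed
    qed
    have degD: "degree V E v = M" if "gamma_set V E D" "v \<in> D" for D v
    proof -
      have "card (cnbhd V E v) = M + 1" using fullD[OF that(1)] that(2) by blast
      then show ?thesis using cn_card[OF G, of v] by simp
    qed
    have A: "(\<exists>!y. y \<in> V - D \<and> efficient_dominating (del_vert_V V y) (del_vert_E E y) D) \<and>
              (\<forall>y \<in> V - D. efficient_dominating (del_vert_V V y) (del_vert_E E y) D
                   \<longrightarrow> card (nbhd V E y \<inter> D) = 2)" if gD: "gamma_set V E D" for D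
    proof -
      have dD: "dominating V E D" using gD unfolding gamma_set_def by auto
      have DV: "D \<subseteq> V" using dD unfolding dominating_def by auto
      have fD: "finite D" using DV fV finite_subset by auto
      define c where "c v = card (cnbhd V E v \<inter> D)" for v
      have ge: "\<forall>v\<in>V. 1 \<le> c v" using dom_cnt[OF dD _ G] unfolding c_def by blast
      have sc: "sum c V = card V + 1" using sandwich[OF gD] eq' unfolding c_def by linarith
      have "sum c V = sum (\<lambda>v. c v - 1) V + sum (\<lambda>v. 1) V"
        unfolding sum.distrib[symmetric] using ge by (intro sum.cong) auto
      then have "sum (\<lambda>v. c v - 1) V = 1" using sc by simp
      from sum_eq_one[OF fV this] obtain y where y0: "y \<in> V" "c y - 1 = 1"
        and oth0: "\<forall>v\<in>V - {y}. c v - 1 = 0" by blast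
      have y: "y \<in> V" "c y = 2" using y0 ge by auto
      have oth: "\<forall>v\<in>V - {y}. c v = 1" using oth0 ge by (metis DiffD1 diff_is_0_eq le_antisym)
      have yD: "y \<notin> D"
      proof
        assume yD: "y \<in> D"
        have yin: "y \<in> cnbhd V E y \<inter> D" using yD unfolding cnbhd_def by auto
        have fin: "finite (cnbhd V E y \<inter> D)" using fD by auto
        obtain d where d: "d \<in> cnbhd V E y \<inter> D" "d \<noteq> y"
        proof -
          have "\<not> (cnbhd V E y \<inter> D \<subseteq> {y})"
          proof
            assume "cnbhd V E y \<inter> D \<subseteq> {y}"
            then have "card (cnbhd V E y \<inter> D) \<le> card {y}" by (intro card_mono) auto
            then show False using y(2) c_def by simp
          qed
          then show ?thesis using that by auto
        qed
        have dV: "d \<in> V" using d DV by auto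
        have "y \<in> cnbhd V E d" using cn_sym[OF G y(1) dV] d by auto
        then have "{y, d} \<subseteq> cnbhd V E d \<inter> D" using yD d unfolding cnbhd_def by auto
        then have "card {y, d} \<le> c d" unfolding c_def using fD by (intro card_mono) auto
        then have "2 \<le> c d" using d(2) by simp
        moreover have "c d = 1" using oth dV d(2) by blast
        ultimately show False by simp
      qed
      have effy: "efficient_dominating (del_vert_V V y) (del_vert_E E y) D"
        using del_eff[OF yD DV] oth c_def by auto
      have uniq: "y' = y" if "y' \<in> V - D" "efficient_dominating (del_vert_V V y') (del_vert_E E y') D" for y'
      proof (rule ccontr)
        assume "y' \<noteq> y"
        then have "c y = 1" using del_eff[of y' D V E] that DV y(1) c_def by auto
        then show False using y by simp
      qed
      have nb: "nbhd V E y \<inter> D = cnbhd V E y \<inter> D" using yD unfolding cnbhd_def by auto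
      show ?thesis
      proof
        show "\<exists>!y. y \<in> V - D \<and> efficient_dominating (del_vert_V V y) (del_vert_E E y) D"
          using effy y yD uniq by blast
        show "\<forall>y' \<in> V - D. efficient_dominating (del_vert_V V y') (del_vert_E E y') D
                   \<longrightarrow> card (nbhd V E y' \<inter> D) = 2"
          using uniq nb y c_def by auto
      qed
    qed
    show "(\<forall>D. gamma_set V E D \<longrightarrow>
              (\<exists>!y. y \<in> V - D \<and> efficient_dominating (del_vert_V V y) (del_vert_E E y) D) \<and>
              (\<forall>y \<in> V - D. efficient_dominating (del_vert_V V y) (del_vert_E E y) D
                   \<longrightarrow> card (nbhd V E y \<inter> D) = 2))
         \<and> (\<forall>v \<in> V. (\<exists>D. gamma_set V E D \<and> v \<in> D) \<longrightarrow> degree V E v = M)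
         \<and> ((\<forall>v \<in> V. \<exists>D. gamma_set V E D \<and> v \<in> D) \<longrightarrow> regular V E)"
    proof (intro conjI allI impI ballI)
      show "\<And>D. gamma_set V E D \<Longrightarrow> \<exists>!y. y \<in> V - D \<and> efficient_dominating (del_vert_V V y) (del_vert_E E y) D"
        using A by blast
      show "\<And>D y. gamma_set V E D \<Longrightarrow> y \<in> V - D \<Longrightarrow> efficient_dominating (del_vert_V V y) (del_vert_E E y) D \<Longrightarrow> card (nbhd V E y \<inter> D) = 2"
        using A by blast
      show "\<And>v. v \<in> V \<Longrightarrow> \<exists>D. gamma_set V E D \<and> v \<in> D \<Longrightarrow> degree V E v = M"
        using degD by blast
      show "(\<forall>v \<in> V. \<exists>D. gamma_set V E D \<and> v \<in> D) \<Longrightarrow> regular V E"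
      proof -
        assume H: "\<forall>v \<in> V. \<exists>D. gamma_set V E D \<and> v \<in> D"
        have "\<forall>v\<in>V. degree V E v = M"
        proof
          fix v assume "v \<in> V"
          then obtain D where "gamma_set V E D" "v \<in> D" using H by blast
          then show "degree V E v = M" by (rule degD)
        qed
        then show "regular V E" unfolding regular_def by simp
      qed
    qed
  qed
  have part3: "(\<exists>D y. gamma_set V E D \<and> y \<in> V - D
              \<and> efficient_dominating (del_vert_V V y) (del_vert_E E y) D
              \<and> card (nbhd V E y \<inter> D) = 2
              \<and> (\<forall>v \<in> D. degree V E v = M))
         \<longrightarrow> card V = g * (M + 1) - 1" (is "?P3")
  proof
    assume "\<exists>D y. gamma_set V E D \<and> y \<in> V - D
              \<and> efficient_dominating (del_vert_V V y) (del_vert_E E y) D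
              \<and> card (nbhd V E y \<inter> D) = 2
              \<and> (\<forall>v \<in> D. degree V E v = M)"
    then obtain D y where gD: "gamma_set V E D" and y: "y \<in> V" "y \<notin> D"
      and eff: "efficient_dominating (del_vert_V V y) (del_vert_E E y) D"
      and two: "card (nbhd V E y \<inter> D) = 2" and dg: "\<forall>v \<in> D. degree V E v = M" by blast
    have dD: "dominating V E D" and cD: "card D = g" using gD unfolding gamma_set_def g_def by auto
    have DV: "D \<subseteq> V" using dD unfolding dominating_def by auto
    have oth: "\<forall>v\<in>V - {y}. card (cnbhd V E v \<inter> D) = 1" using del_eff[OF y(2) DV] eff by blast
    have nb: "nbhd V E y \<inter> D = cnbhd V E y \<inter> D" using y(2) unfolding cnbhd_def by auto
    have "(\<Sum>v\<in>V. card (cnbhd V E v \<inter> D)) = card (cnbhd V E y \<inter> D) + (\<Sum>v\<in>V - {y}. card (cnbhd V E v \<inter> D))"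
      by (rule sum.remove[OF fV y(1)])
    also have "\<dots> = 2 + card (V - {y})" using oth two nb by simp
    also have "\<dots> = card V + 1"
    proof -
      have "card (V - {y}) = card V - 1" using y(1) by (rule card_Diff_singleton)
      moreover have "card V > 0" using fV y(1) card_gt_0_iff by blast
      ultimately show ?thesis by linarith
    qed
    finally have s1: "(\<Sum>v\<in>V. card (cnbhd V E v \<inter> D)) = card V + 1" .
    have "(\<Sum>d\<in>D. card (cnbhd V E d)) = (\<Sum>d\<in>D. M + 1)"
      using dg cn_card[OF G] by (intro sum.cong) auto
    then have "(\<Sum>d\<in>D. card (cnbhd V E d)) = g * (M + 1)" using cD by simp
    then show "card V = g * (M + 1) - 1" using s1 double_count[OF G DV] by simp
  qed
  have "card V \<le> g * (M + 1) - 1 \<and> ?P2 \<and> ?P3" using part1 part2 part3 by (intro conjI)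
  then show ?thesis unfolding g_def M_def .
qed

end
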